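(* Let $(a_n)\in\ell_1$ with $\sum_n|a_n|=1$ and $\frac12<\sup_{n\in\mathbb N}|a_n|<1$. Then the hyperplane $Y=\{x\in c_0:\sum_n a_nx_n=0\}$ has property-$(SU)$ in $c_0$ but does not have property-$(HB)$ in $c_0$.
   Context: $c_0$ carries the sup norm and $c_0^*=\ell_1$. $Y^\perp=\{x^*\in\ell_1:x^*|_Y=0\}$. $Y$ has property-$(SU)$ in $X$ if there is a bounded linear projection $P$ on $X^*$ with range $Y^\perp$ such that, with $G=(I-P)(X^* )$, for every $x^*=y^\#+y^\perp$ with $y^\#\in G$, $0\ne y^\perp\in Y^\perp$, one has $\|x^*\|>\|y^\#\|$. $Y$ has property-$(HB)$ in $X$ if moreover such a $P$ can be chosen with $\|P\|=1$ and also $\|x^*\|\ge\|y^\perp\|$ for all such decompositions. *)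

theory Defs
  imports Complex_Main
begin

text \<open>Real sequences are modelled as functions nat => real.
  c_0 = sequences tending to 0 (sup norm); its dual is identified with l_1,
  the duality being (x*, x) |-> sum_n x*_n x_n.\<close>

definition c0 :: "(nat \<Rightarrow> real) set" where
  "c0 = {x. x \<longlonglongrightarrow> 0}"

definition l1 :: "(nat \<Rightarrow> real) set" where
  "l1 = {f. summable (\<lambda>n. \<bar>f n\<bar>)}"

definition l1norm :: "(nat \<Rightarrow> real) \<Rightarrow> real" where
  "l1norm f = (\<Sum>n. \<bar>f n\<bar>)"

definition pairing :: "(nat \<Rightarrow> real) \<Rightarrow> (nat \<Rightarrow> real) \<Rightarrow> real" where
  "pairing f x = (\<Sum>n. f n * x n)"

definition annih :: "(nat \<Rightarrow> real) set \<Rightarrow> (nat \<Rightarrow> real) set" where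
  "annih Y = {f \<in> l1. \<forall>y\<in>Y. pairing f y = 0}"

definition l1_bounded_linear :: "((nat \<Rightarrow> real) \<Rightarrow> (nat \<Rightarrow> real)) \<Rightarrow> bool" where
  "l1_bounded_linear P \<longleftrightarrow>
     (\<forall>f\<in>l1. P f \<in> l1) \<and>
     (\<forall>f\<in>l1. \<forall>g\<in>l1. P (\<lambda>n. f n + g n) = (\<lambda>n. P f n + P g n)) \<and>
     (\<forall>c. \<forall>f\<in>l1. P (\<lambda>n. c * f n) = (\<lambda>n. c * P f n)) \<and>
     (\<exists>C. \<forall>f\<in>l1. l1norm (P f) \<le> C * l1norm f)"

definition l1_opnorm :: "((nat \<Rightarrow> real) \<Rightarrow> (nat \<Rightarrow> real)) \<Rightarrow> real" where
  "l1_opnorm P = Sup {l1norm (P f) | f. f \<in> l1 \<and> l1norm f \<le> 1}"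

definition proj_onto_annih :: "(nat \<Rightarrow> real) set \<Rightarrow> ((nat \<Rightarrow> real) \<Rightarrow> (nat \<Rightarrow> real)) \<Rightarrow> bool" where
  "proj_onto_annih Y P \<longleftrightarrow> l1_bounded_linear P \<and> (\<forall>f\<in>l1. P (P f) = P f) \<and> P ` l1 = annih Y"

definition compl_range :: "((nat \<Rightarrow> real) \<Rightarrow> (nat \<Rightarrow> real)) \<Rightarrow> (nat \<Rightarrow> real) set" where
  "compl_range P = (\<lambda>f. \<lambda>n. f n - P f n) ` l1"

definition SU_cond :: "(nat \<Rightarrow> real) set \<Rightarrow> ((nat \<Rightarrow> real) \<Rightarrow> (nat \<Rightarrow> real)) \<Rightarrow> bool" where
  "SU_cond Y P \<longleftrightarrow> (\<forall>g\<in>compl_range P. \<forall>h\<in>annih Y. h \<noteq> (\<lambda>_. 0) \<longrightarrow>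
       l1norm (\<lambda>n. g n + h n) > l1norm g)"

definition HB_cond :: "(nat \<Rightarrow> real) set \<Rightarrow> ((nat \<Rightarrow> real) \<Rightarrow> (nat \<Rightarrow> real)) \<Rightarrow> bool" where
  "HB_cond Y P \<longleftrightarrow> (\<forall>g\<in>compl_range P. \<forall>h\<in>annih Y. h \<noteq> (\<lambda>_. 0) \<longrightarrow>
       l1norm (\<lambda>n. g n + h n) \<ge> l1norm h)"

definition property_SU_c0 :: "(nat \<Rightarrow> real) set \<Rightarrow> bool" where
  "property_SU_c0 Y \<longleftrightarrow> (\<exists>P. proj_onto_annih Y P \<and> SU_cond Y P)"

definition property_HB_c0 :: "(nat \<Rightarrow> real) set \<Rightarrow> bool" where
  "property_HB_c0 Y \<longleftrightarrow>
     (\<exists>P. proj_onto_annih Y P \<and> SU_cond Y P \<and> l1_opnorm P = 1 \<and> HB_cond Y P)"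

end

theory Submission
  imports Defs
begin


lemma l1_le: "f \<in> l1 \<Longrightarrow> \<bar>f k\<bar> \<le> l1norm f"
  unfolding l1_def l1norm_def
  using sum_le_suminf[of "\<lambda>n. \<bar>f n\<bar>" "{k}"] by auto

lemma l1norm_nonneg: "f \<in> l1 \<Longrightarrow> 0 \<le> l1norm f"
  unfolding l1_def l1norm_def by (simp add: suminf_nonneg)

lemma l1_lin: "f \<in> l1 \<Longrightarrow> g \<in> l1 \<Longrightarrow> (\<lambda>n. s * f n + t * g n) \<in> l1"
  unfolding l1_def
proof -
  assume "f \<in> {f. summable (\<lambda>n. \<bar>f n\<bar>)}" "g \<in> {f. summable (\<lambda>n. \<bar>f n\<bar>)}"
  then have "summable (\<lambda>n. \<bar>s\<bar> * \<bar>f n\<bar> + \<bar>t\<bar> * \<bar>g n\<bar>)"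
    by (auto intro!: summable_add summable_mult)
  then have "summable (\<lambda>n. \<bar>s * f n + t * g n\<bar>)"
  proof (rule summable_comparison_test[rotated], intro exI allI impI)
    fix n :: nat
    show "norm \<bar>s * f n + t * g n\<bar> \<le> \<bar>s\<bar> * \<bar>f n\<bar> + \<bar>t\<bar> * \<bar>g n\<bar>"
      by (metis abs_abs abs_mult abs_triangle_ineq real_norm_def)
  qed
  then show "(\<lambda>n. s * f n + t * g n) \<in> {f. summable (\<lambda>n. \<bar>f n\<bar>)}" by simp
qed

lemma l1_scale: "f \<in> l1 \<Longrightarrow> (\<lambda>n. c * f n) \<in> l1"
  using l1_lin[of f f c 0] by simp

lemma l1_diff: "f \<in> l1 \<Longrightarrow> g \<in> l1 \<Longrightarrow> (\<lambda>n. f n - c * g n) \<in> l1"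
  using l1_lin[of f g 1 "-c"] by simp

lemma l1_add: "f \<in> l1 \<Longrightarrow> g \<in> l1 \<Longrightarrow> (\<lambda>n. f n + g n) \<in> l1"
  using l1_lin[of f g 1 1] by simp

lemma l1norm_scale: "f \<in> l1 \<Longrightarrow> l1norm (\<lambda>n. c * f n) = \<bar>c\<bar> * l1norm f"
  unfolding l1_def l1norm_def by (simp add: abs_mult suminf_mult)

lemma unit_l1: "(\<lambda>n. if n = k then 1 else 0 :: real) \<in> l1"
  unfolding l1_def using summable_single[of k "\<lambda>_. 1::real"] by (simp add: if_distrib cong: if_cong)

lemma suminf_adj: "summable u \<Longrightarrow> suminf (\<lambda>n. u n + (if n = k then c else 0)) = suminf u + (c::real)"
proof -
  assume u: "summable u"
  have s: "(\<lambda>n. if n = k then c else 0) sums c" using sums_single[of k "\<lambda>_. c"] by simp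
  show ?thesis using suminf_add[OF u sums_summable[OF s]] sums_unique[OF s] by simp
qed

lemma unit_norm: "l1norm (\<lambda>n. if n = k then 1 else 0 :: real) = 1"
  unfolding l1norm_def using suminf_adj[of "\<lambda>_. 0" k 1] by (simp add: if_distrib cong: if_cong)

lemma pairing_summable: assumes "a \<in> l1" "y \<in> c0" shows "summable (\<lambda>n. a n * y n)"
proof -
  have "convergent y" using assms(2) unfolding c0_def convergent_def by auto
  then have "Bseq y" by (rule convergent_imp_Bseq)
  then obtain K where K: "K > 0" "\<And>n. norm (y n) \<le> K" by (auto elim: BseqE)
  have "summable (\<lambda>n. K * \<bar>a n\<bar>)" using assms(1) unfolding l1_def by (auto intro: summable_mult)
  then show ?thesis
  proof (rule summable_comparison_test[rotated], intro exI allI impI)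
    fix n :: nat
    have "\<bar>a n\<bar> * \<bar>y n\<bar> \<le> \<bar>a n\<bar> * K" using K(2)[of n] by (simp add: mult_left_mono)
    then show "norm (a n * y n) \<le> K * \<bar>a n\<bar>" by (simp add: abs_mult mult.commute)
  qed
qed

lemma scale_annih: assumes "a \<in> l1" shows "(\<lambda>n. c * a n) \<in> annih {x \<in> c0. pairing a x = 0}"
  unfolding annih_def
proof (intro CollectI conjI ballI)
  show "(\<lambda>n. c * a n) \<in> l1" using assms by (rule l1_scale)
  fix y assume "y \<in> {x \<in> c0. pairing a x = 0}"
  then have "y \<in> c0" "pairing a y = 0" by auto
  then show "pairing (\<lambda>n. c * a n) y = 0"
    using suminf_mult[OF pairing_summable[OF assms \<open>y \<in> c0\<close>], of c]
    unfolding pairing_def by (simp add: mult.assoc)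
qed

lemma annih_char: assumes ak: "a k \<noteq> 0" and f: "f \<in> annih {x \<in> c0. pairing a x = 0}"
  shows "f = (\<lambda>n. f k / a k * a n)"
proof
  fix n
  define y where "y = (\<lambda>i. (if i = n then 1 else 0) - (a n / a k) * (if i = k then 1 else (0::real)))"
  have y0: "\<And>i. i \<notin> {n, k} \<Longrightarrow> y i = 0" unfolding y_def by auto
  have "eventually (\<lambda>i. y i = 0) sequentially"
    unfolding eventually_sequentially using y0 by (intro exI[of _ "Suc (max n k)"]) (metis Suc_le_eq insertE max.strict_boundedE order_less_irrefl singletonD)
  then have "y \<in> c0" unfolding c0_def by (auto intro: tendsto_eventually)
  have pg: "pairing g y = (\<Sum>i\<in>{n,k}. g i * y i)" for g
    unfolding pairing_def by (rule suminf_finite) (use y0 in auto)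
  have "pairing a y = 0" unfolding pg using ak by (cases "n = k") (auto simp: y_def)
  with \<open>y \<in> c0\<close> f have "pairing f y = 0" unfolding annih_def by auto
  then show "f n = f k / a k * a n" unfolding pg using ak by (cases "n = k") (auto simp: y_def field_simps)
qed



lemma SU_part:
  assumes al: "a \<in> l1" and an: "l1norm a = 1" and m1: "1/2 < \<bar>a k\<bar>" and m2: "\<bar>a k\<bar> < 1"
  shows "property_SU_c0 {x \<in> c0. pairing a x = 0}"
proof -
  let ?Y = "{x \<in> c0. pairing a x = 0}"
  define m where "m = \<bar>a k\<bar>"
  have ak: "a k \<noteq> 0" using m1 by auto
  have mpos: "m > 0" using m1 m_def by auto
  define P where "P = (\<lambda>(f::nat\<Rightarrow>real) n. f k / a k * a n)"
  have sa: "summable (\<lambda>n. \<bar>a n\<bar>)" using al unfolding l1_def by auto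
  have bl: "l1_bounded_linear P"
    unfolding l1_bounded_linear_def
  proof (intro conjI ballI allI exI)
    fix f :: "nat \<Rightarrow> real" assume f: "f \<in> l1"
    show "P f \<in> l1" unfolding P_def using l1_scale[OF al] by blast
    show "l1norm (P f) \<le> (1/m) * l1norm f"
    proof -
      have "l1norm (P f) = \<bar>f k / a k\<bar>" unfolding P_def using l1norm_scale[OF al, of "f k / a k"] an by (simp only: mult_1_right)
      also have "\<dots> = \<bar>f k\<bar> / m" by (simp add: m_def abs_divide)
      also have "\<dots> \<le> l1norm f / m" using l1_le[OF f] mpos by (simp add: divide_right_mono)
      finally show ?thesis by simp
    qed
  next
    fix f g :: "nat \<Rightarrow> real"
    show "P (\<lambda>n. f n + g n) = (\<lambda>n. P f n + P g n)" unfolding P_def by (auto simp: add_divide_distrib distrib_right)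
  next
    fix c and f :: "nat \<Rightarrow> real"
    show "P (\<lambda>n. c * f n) = (\<lambda>n. c * P f n)" unfolding P_def by auto
  qed
  have proj: "proj_onto_annih ?Y P"
    unfolding proj_onto_annih_def
  proof (intro conjI ballI bl)
    fix f :: "nat \<Rightarrow> real"
    show "P (P f) = P f" unfolding P_def using ak by auto
  next
    show "P ` l1 = annih ?Y"
    proof
      show "P ` l1 \<subseteq> annih ?Y" unfolding P_def using scale_annih[OF al] by (auto simp del: times_divide_eq_left)
      show "annih ?Y \<subseteq> P ` l1"
      proof
        fix f assume f: "f \<in> annih ?Y"
        then have "f \<in> l1" unfolding annih_def by auto
        moreover have "f = P f" unfolding P_def by (rule annih_char[OF ak f])
        ultimately show "f \<in> P ` l1" by blast
      qed
    qed
  qed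
  have su: "SU_cond ?Y P"
    unfolding SU_cond_def
  proof (intro ballI impI)
    fix g h assume g: "g \<in> compl_range P" and h: "h \<in> annih ?Y" and h0: "h \<noteq> (\<lambda>_. 0)"
    obtain f where f: "f \<in> l1" and gf: "g = (\<lambda>n. f n - f k / a k * a n)"
      using g unfolding compl_range_def P_def by auto
    have gk: "g k = 0" using gf ak by simp
    have gl: "g \<in> l1" unfolding gf by (rule l1_diff[OF f al])
    define c where "c = h k / a k"
    have hc: "h = (\<lambda>n. c * a n)" unfolding c_def by (rule annih_char[OF ak h])
    have c0: "c \<noteq> 0" using h0 hc by auto
    have hl: "h \<in> l1" unfolding hc by (rule l1_scale[OF al])
    have sg: "summable (\<lambda>n. \<bar>g n\<bar>)" using gl unfolding l1_def by auto
    have sgh: "summable (\<lambda>n. \<bar>g n + h n\<bar>)" using l1_add[OF gl hl] unfolding l1_def by auto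
    define w where "w = (\<lambda>n. (\<bar>g n\<bar> - \<bar>c\<bar> * \<bar>a n\<bar>) + (if n = k then 2 * \<bar>c\<bar> * m else 0))"
    have sw0: "summable (\<lambda>n. \<bar>g n\<bar> - \<bar>c\<bar> * \<bar>a n\<bar>)" using sg sa by (intro summable_diff summable_mult)
    have "suminf w = suminf (\<lambda>n. \<bar>g n\<bar> - \<bar>c\<bar> * \<bar>a n\<bar>) + 2 * \<bar>c\<bar> * m"
      unfolding w_def by (rule suminf_adj[OF sw0])
    also have "\<dots> = l1norm g - \<bar>c\<bar> + 2 * \<bar>c\<bar> * m"
      using suminf_diff[OF sg summable_mult[OF sa, of "\<bar>c\<bar>"]] suminf_mult[OF sa, of "\<bar>c\<bar>"] an
      unfolding l1norm_def by simp
    finally have sw: "suminf w = l1norm g + \<bar>c\<bar> * (2 * m - 1)" by (simp add: algebra_simps)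
    have "suminf w \<le> l1norm (\<lambda>n. g n + h n)"
      unfolding l1norm_def
    proof (rule suminf_le)
      show "summable w" unfolding w_def using sw0 by (intro summable_add) auto
      show "summable (\<lambda>n. \<bar>g n + h n\<bar>)" by (rule sgh)
      fix n show "w n \<le> \<bar>g n + h n\<bar>"
      proof (cases "n = k")
        case True then show ?thesis unfolding w_def hc using gk by (simp add: m_def abs_mult)
      next
        case False
        have "\<bar>g n\<bar> - \<bar>c * a n\<bar> \<le> \<bar>g n + c * a n\<bar>" by (metis abs_triangle_ineq4 diff_minus_eq_add abs_minus_cancel add.commute abs_diff_triangle_ineq add_diff_cancel_left' abs_triangle_ineq2_sym)
        then show ?thesis unfolding w_def hc using False by (simp add: abs_mult)
      qed
    qed
    moreover have "\<bar>c\<bar> * (2 * m - 1) > 0" using c0 m1 m_def by simp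
    ultimately show "l1norm (\<lambda>n. g n + h n) > l1norm g" using sw by linarith
  qed
  show ?thesis unfolding property_SU_c0_def using proj su by blast
qed



lemma notHB_part:
  assumes al: "a \<in> l1" and an: "l1norm a = 1" and m1: "1/2 < \<bar>a k\<bar>" and m2: "\<bar>a k\<bar> < 1"
  shows "\<not> property_HB_c0 {x \<in> c0. pairing a x = 0}"
proof
  let ?Y = "{x \<in> c0. pairing a x = 0}"
  assume "property_HB_c0 ?Y"
  then obtain P where proj: "proj_onto_annih ?Y P" and su: "SU_cond ?Y P" and on: "l1_opnorm P = 1"
    unfolding property_HB_c0_def by blast
  define m where "m = \<bar>a k\<bar>"
  have ak: "a k \<noteq> 0" using m1 by auto
  have mpos: "m > 0" using m1 m_def by auto
  have sa: "summable (\<lambda>n. \<bar>a n\<bar>)" using al unfolding l1_def by auto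
  have bl: "l1_bounded_linear P" and idem: "\<And>f. f \<in> l1 \<Longrightarrow> P (P f) = P f" and img: "P ` l1 = annih ?Y"
    using proj unfolding proj_onto_annih_def by auto
  have Pl: "\<And>f. f \<in> l1 \<Longrightarrow> P f \<in> l1"
    and Padd: "\<And>f g. f \<in> l1 \<Longrightarrow> g \<in> l1 \<Longrightarrow> P (\<lambda>n. f n + g n) = (\<lambda>n. P f n + P g n)"
    and Pscale: "\<And>c f. f \<in> l1 \<Longrightarrow> P (\<lambda>n. c * f n) = (\<lambda>n. c * P f n)"
    using bl unfolding l1_bounded_linear_def by auto
  obtain C where C: "\<And>f. f \<in> l1 \<Longrightarrow> l1norm (P f) \<le> C * l1norm f"
    using bl unfolding l1_bounded_linear_def by blast
  define \<phi> where "\<phi> = (\<lambda>f. P f k / a k)"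
  have Pphi: "\<And>f. f \<in> l1 \<Longrightarrow> P f = (\<lambda>n. \<phi> f * a n)"
    unfolding \<phi>_def using img by (intro annih_char[of a k, OF ak]) auto
  have bdd: "bdd_above {l1norm (P f) | f. f \<in> l1 \<and> l1norm f \<le> 1}"
  proof (rule bdd_aboveI)
    fix x assume "x \<in> {l1norm (P f) | f. f \<in> l1 \<and> l1norm f \<le> 1}"
    then obtain f where f: "f \<in> l1" "l1norm f \<le> 1" "x = l1norm (P f)" by auto
    have "C * l1norm f \<le> \<bar>C\<bar> * l1norm f"
      using l1norm_nonneg[OF f(1)] by (intro mult_right_mono) auto
    also have "\<dots> \<le> \<bar>C\<bar> * 1" using f(2) by (intro mult_left_mono) auto
    finally have "C * l1norm f \<le> \<bar>C\<bar>" by simp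
    then show "x \<le> \<bar>C\<bar>" using C[OF f(1)] f(3) by simp
  qed
  have nb1: "l1norm (P f) \<le> 1" if "f \<in> l1" "l1norm f \<le> 1" for f
    using cSup_upper[OF _ bdd, of "l1norm (P f)"] that on unfolding l1_opnorm_def by auto
  have normP: "l1norm (P f) = \<bar>\<phi> f\<bar>" if "f \<in> l1" for f
    using Pphi[OF that] l1norm_scale[OF al, of "\<phi> f"] an by simp
  have phib: "\<bar>\<phi> f\<bar> \<le> l1norm f" if f: "f \<in> l1" and fp: "l1norm f > 0" for f
  proof -
    define L where "L = l1norm f"
    have f': "(\<lambda>n. (1/L) * f n) \<in> l1" using l1_scale[OF f] .
    have "l1norm (\<lambda>n. (1/L) * f n) = 1" using l1norm_scale[OF f, of "1/L"] fp L_def by simp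
    then have "l1norm (P (\<lambda>n. (1/L) * f n)) \<le> 1" using nb1[OF f'] by simp
    moreover have "l1norm (P (\<lambda>n. (1/L) * f n)) = (1/L) * \<bar>\<phi> f\<bar>"
      unfolding Pscale[OF f, of "1/L"] using l1norm_scale[OF Pl[OF f], of "1/L"] normP[OF f] fp L_def by simp
    ultimately show ?thesis using fp L_def by (simp add: divide_le_eq)
  qed
  define e where "e = (\<lambda>n. if n = k then 1 else 0 :: real)"
  have el: "e \<in> l1" unfolding e_def by (rule unit_l1)
  have en: "l1norm e = 1" unfolding e_def by (rule unit_norm)
  define r where "r = (\<lambda>n. a n - a k * e n)"
  have rl: "r \<in> l1" unfolding r_def by (rule l1_diff[OF al el])
  have rn: "l1norm r = 1 - m"
  proof -
    have "(\<lambda>n. \<bar>r n\<bar>) = (\<lambda>n. \<bar>a n\<bar> + (if n = k then - m else 0))"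
      unfolding r_def e_def m_def by auto
    then have "l1norm r = suminf (\<lambda>n. \<bar>a n\<bar> + (if n = k then - m else 0))"
      unfolding l1norm_def by (rule arg_cong[where f=suminf])
    also have "\<dots> = l1norm a + (- m)" unfolding l1norm_def by (rule suminf_adj[OF sa])
    finally show ?thesis using an by simp
  qed
  define \<beta> where "\<beta> = \<phi> e"
  define \<rho> where "\<rho> = \<phi> r"
  have aY: "a \<in> annih ?Y" using scale_annih[OF al, of 1] by simp
  then obtain f0 where f0: "f0 \<in> l1" "a = P f0" using img by blast
  have Paa: "P a = a" using idem[OF f0(1)] f0(2) by simp
  have "a = (\<lambda>n. a k * e n + r n)" unfolding r_def by auto
  then have "P a = (\<lambda>n. a k * P e n + P r n)"
    using Padd[OF l1_scale[OF el, of "a k"] rl] Pscale[OF el, of "a k"] by simp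
  then have "a = (\<lambda>n. a k * P e n + P r n)" using Paa by simp
  then have "a k = a k * P e k + P r k" by (rule fun_cong)
  then have eq1: "1 = a k * \<beta> + \<rho>"
    unfolding \<beta>_def \<rho>_def \<phi>_def using ak by (simp add: field_simps)
  have b1: "\<bar>\<beta>\<bar> \<le> 1" using phib[OF el] en \<beta>_def by simp
  have r1: "\<bar>\<rho>\<bar> \<le> 1 - m" using phib[OF rl] rn \<rho>_def m2 m_def by simp
  have abk: "\<bar>a k * \<beta>\<bar> \<le> m" using b1 m_def by (simp add: abs_mult mult_left_le)
  have akb: "a k * \<beta> = m" using eq1 r1 abk by linarith
  have "\<bar>a k\<bar> * \<bar>\<beta>\<bar> = \<bar>a k\<bar>" using akb m_def by (simp add: abs_mult[symmetric])
  then have babs: "\<bar>\<beta>\<bar> = 1" using ak by simp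
  define g where "g = (\<lambda>n. e n - P e n)"
  have gc: "g \<in> compl_range P" unfolding g_def compl_range_def using el by blast
  have gform: "g = (\<lambda>n. e n - \<beta> * a n)" unfolding g_def \<beta>_def using Pphi[OF el] by simp
  define t where "t = \<beta> * (1 - 1/m)"
  define h where "h = (\<lambda>n. t * a n)"
  have ha: "h \<in> annih ?Y" unfolding h_def by (rule scale_annih[OF al])
  have "h k = (a k * \<beta>) * (1 - 1/m)" unfolding h_def t_def by (simp add: algebra_simps)
  also have "\<dots> = m - 1" using akb mpos by (simp add: field_simps)
  finally have "h k = m - 1" .
  then have h0: "h \<noteq> (\<lambda>_. 0)" using m2 m_def by auto
  have "l1norm (\<lambda>n. g n + h n) > l1norm g" using su gc ha h0 unfolding SU_cond_def by (meson)
  moreover have "l1norm g = 2 - 2 * m"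
  proof -
    have "(\<lambda>n. \<bar>g n\<bar>) = (\<lambda>n. \<bar>a n\<bar> + (if n = k then 1 - 2 * m else 0))"
    proof
      fix n show "\<bar>g n\<bar> = \<bar>a n\<bar> + (if n = k then 1 - 2 * m else 0)"
      proof (cases "n = k")
        case True then show ?thesis unfolding gform e_def using akb m2 m_def by (simp add: mult.commute)
      next
        case False then show ?thesis unfolding gform e_def using babs by (simp add: abs_mult)
      qed
    qed
    then have "l1norm g = suminf (\<lambda>n. \<bar>a n\<bar> + (if n = k then 1 - 2 * m else 0))"
      unfolding l1norm_def by (rule arg_cong[where f=suminf])
    also have "\<dots> = l1norm a + (1 - 2 * m)" unfolding l1norm_def by (rule suminf_adj[OF sa])
    finally show ?thesis using an by simp
  qed
  moreover have "l1norm (\<lambda>n. g n + h n) = 1/m - 1"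
  proof -
    have "(\<lambda>n. \<bar>g n + h n\<bar>) = (\<lambda>n. \<bar>a n\<bar> / m + (if n = k then - 1 else 0))"
    proof
      fix n show "\<bar>g n + h n\<bar> = \<bar>a n\<bar> / m + (if n = k then - 1 else 0)"
      proof (cases "n = k")
        case True
        have "g n + h n = 1 - \<beta> * a k / m" unfolding gform h_def t_def e_def using True mpos
          by (simp add: field_simps)
        also have "\<dots> = 0" using akb mpos by (simp add: mult.commute)
        finally show ?thesis using True m_def mpos by simp
      next
        case False
        have "g n + h n = - (\<beta> * a n / m)" unfolding gform h_def t_def e_def using False mpos
          by (simp add: field_simps)
        then show ?thesis using False babs mpos by (simp add: abs_mult)
      qed
    qed
    moreover have "suminf (\<lambda>n. \<bar>a n\<bar> / m) = 1 / m" using suminf_divide[OF sa, of m] an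
      unfolding l1norm_def by simp
    moreover have "suminf (\<lambda>n. \<bar>a n\<bar> / m + (if n = k then - 1 else 0)) = suminf (\<lambda>n. \<bar>a n\<bar> / m) + (-1)"
      by (rule suminf_adj[OF summable_divide[OF sa]])
    ultimately show ?thesis unfolding l1norm_def by (metis diff_conv_add_uminus)
  qed
  ultimately have lt: "2 - 2 * m < 1/m - 1" by simp
  have "(2 - 2 * m) * m < (1/m - 1) * m" using mult_strict_right_mono[OF lt mpos] .
  moreover have "(1/m - 1) * m = 1 - m" using mpos by (simp add: left_diff_distrib)
  moreover have "(2 - 2 * m) * m = 2 * m - 2 * (m * m)" by (simp add: algebra_simps)
  moreover have "(2 * m - 1) * (1 - m) > 0" using m1 m2 m_def by (intro mult_pos_pos) auto
  moreover have "(2 * m - 1) * (1 - m) = 3 * m - 2 * (m * m) - 1" by (simp add: algebra_simps)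
  ultimately show False by linarith
qed


theorem theorem3p16:
  fixes a :: "nat \<Rightarrow> real"
  assumes "a \<in> l1"
    and "l1norm a = 1"
    and "1/2 < (SUP n. \<bar>a n\<bar>)"
    and "(SUP n. \<bar>a n\<bar>) < 1"
  shows "property_SU_c0 {x \<in> c0. pairing a x = 0} \<and>
         \<not> property_HB_c0 {x \<in> c0. pairing a x = 0}"
proof -
  have bdd: "bdd_above (range (\<lambda>n. \<bar>a n\<bar>))"
  proof (rule bdd_aboveI)
    fix x assume "x \<in> range (\<lambda>n. \<bar>a n\<bar>)"
    then obtain n where "x = \<bar>a n\<bar>" by auto
    then show "x \<le> 1" using l1_le[OF assms(1), of n] assms(2) by simp
  qed
  obtain k where k1: "1/2 < \<bar>a k\<bar>" using less_cSUP_iff[OF _ bdd, of "1/2"] assms(3) by blast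
  have k2: "\<bar>a k\<bar> < 1" using cSUP_upper[OF _ bdd, of k] assms(4) by simp
  show ?thesis using SU_part[OF assms(1,2) k1 k2] notHB_part[OF assms(1,2) k1 k2] by blast
qed

end
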